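(* Let $n \ge 2$ be an integer and let $1 \le \underline{x}_i < \bar{x}_i$ for $i \in \{1,2\}$. Consider the bilevel problem $$\max_{x \in \mathbb{R}^2} \; F(x,y) = x_1 - 2y_{n+1} + y_{n+2} \quad \text{s.t.} \quad (x_1,x_2) \in [\underline{x}_1,\bar{x}_1] \times [\underline{x}_2,\bar{x}_2],\; y \in S(x),$$ where $S(x)$ is the set of optimal solutions of the lower-level problem $$\max_{y \in \mathbb{R}^{n+2}} \; f(x,y) = y_1 - y_n\,(x_1 + x_2 - y_{n+1} - y_{n+2})$$ subject to $y_1 + y_n = \tfrac12$, $y_i^2 \le y_{i+1}$ for $i \in \{1,\dots,n-1\}$, $y_i \ge 0$ for $i \in \{1,\dots,n\}$, $y_{n+1} \in [0,x_1]$, $y_{n+2} \in [-x_2,x_2]$. Then this bilevel problem has a unique solution, given by $x^* = (\underline{x}_1,\bar{x}_2)$, with optimal objective function value $F^* = -\underline{x}_1 + \bar{x}_2$.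
   Context: For every feasible $x$, $S(x)$ is a singleton, so the bilevel problem is well defined (no distinction between optimistic and pessimistic variants is needed). *)

theory Defs
  imports Main "HOL.Real"
begin

text \<open>Points y of R^(n+2) are represented as functions nat \<Rightarrow> real with
  1-based indices 1..n+2, vanishing outside this index range.
  Upper-level variable x = (x1, x2) is a pair of reals.\<close>

definition ll_feasible :: "nat \<Rightarrow> real \<times> real \<Rightarrow> (nat \<Rightarrow> real) \<Rightarrow> bool" where
  "ll_feasible n x y \<longleftrightarrow>
     (\<forall>i. i \<notin> {1..n+2} \<longrightarrow> y i = 0) \<and>
     y 1 + y n = 1/2 \<and>
     (\<forall>i\<in>{1..n-1}. (y i)^2 \<le> y (i+1)) \<and>
     (\<forall>i\<in>{1..n}. 0 \<le> y i) \<and>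
     0 \<le> y (n+1) \<and> y (n+1) \<le> fst x \<and>
     - snd x \<le> y (n+2) \<and> y (n+2) \<le> snd x"

definition ll_obj :: "nat \<Rightarrow> real \<times> real \<Rightarrow> (nat \<Rightarrow> real) \<Rightarrow> real" where
  "ll_obj n x y = y 1 - y n * (fst x + snd x - y (n+1) - y (n+2))"

definition ll_S :: "nat \<Rightarrow> real \<times> real \<Rightarrow> (nat \<Rightarrow> real) set" where
  "ll_S n x = {y. ll_feasible n x y \<and> (\<forall>y'. ll_feasible n x y' \<longrightarrow> ll_obj n x y' \<le> ll_obj n x y)}"

definition ul_obj :: "nat \<Rightarrow> real \<times> real \<Rightarrow> (nat \<Rightarrow> real) \<Rightarrow> real" where
  "ul_obj n x y = fst x - 2 * y (n+1) + y (n+2)"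

definition bl_feasible :: "nat \<Rightarrow> real \<Rightarrow> real \<Rightarrow> real \<Rightarrow> real \<Rightarrow> real \<times> real \<Rightarrow> (nat \<Rightarrow> real) \<Rightarrow> bool" where
  "bl_feasible n lo1 hi1 lo2 hi2 x y \<longleftrightarrow>
     lo1 \<le> fst x \<and> fst x \<le> hi1 \<and> lo2 \<le> snd x \<and> snd x \<le> hi2 \<and> y \<in> ll_S n x"

definition bl_solutions :: "nat \<Rightarrow> real \<Rightarrow> real \<Rightarrow> real \<Rightarrow> real \<Rightarrow> ((real \<times> real) \<times> (nat \<Rightarrow> real)) set" where
  "bl_solutions n lo1 hi1 lo2 hi2 =
     {(x, y). bl_feasible n lo1 hi1 lo2 hi2 x y \<and>
        (\<forall>x' y'. bl_feasible n lo1 hi1 lo2 hi2 x' y' \<longrightarrow> ul_obj n x' y' \<le> ul_obj n x y)}"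

end

theory Submission
  imports Defs Complex_Main
begin

lemma feas_lower:
  fixes y :: "nat \<Rightarrow> real"
  assumes f: "ll_feasible n x y"
  shows "1 \<le> i \<Longrightarrow> i \<le> n \<Longrightarrow> y 1 ^ (2^(i-1)) \<le> y i"
proof (induction i)
  case 0 then show ?case by simp
next
  case (Suc i)
  show ?case
  proof (cases "i = 0")
    case True then show ?thesis by simp
  next
    case False
    have y1: "0 \<le> y 1" using f Suc.prems unfolding ll_feasible_def by auto
    have ih: "y 1 ^ (2^(i-1)) \<le> y i" using Suc False by simp
    have step: "(y i)^2 \<le> y (i+1)" using f Suc.prems False unfolding ll_feasible_def by auto
    have "(y 1 ^ (2^(i-1)))^2 \<le> (y i)^2"
      by (rule power_mono[OF ih]) (use y1 in simp)
    moreover have "(y 1 ^ (2^(i-1)))^2 = y 1 ^ (2^(Suc i - 1))"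
      using False by (simp add: power_mult[symmetric]) (metis Suc_pred neq0_conv power_Suc2)
    ultimately show ?thesis using step by simp
  qed
qed

lemma feas_upper:
  fixes y :: "nat \<Rightarrow> real" and c :: real
  assumes f: "ll_feasible n x y" and c: "0 \<le> c" and yn: "y n \<le> c ^ (2^(n-1))"
    and n: "n \<ge> 1"
  shows "k \<le> n - 1 \<Longrightarrow> y (n-k) \<le> c ^ (2^(n-k-1))"
proof (induction k)
  case 0 then show ?case using yn by simp
next
  case (Suc k)
  define i where "i = n - Suc k"
  have i1: "1 \<le> i" "i \<le> n - 1" using Suc.prems unfolding i_def by auto
  have ip: "i + 1 = n - k" using Suc.prems unfolding i_def by auto
  have step: "(y i)^2 \<le> y (i+1)" using f i1 unfolding ll_feasible_def by auto
  have ih: "y (n-k) \<le> c ^ (2^(n-k-1))" using Suc by simp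
  have e: "c ^ (2^(n-k-1)) = (c ^ (2^(i-1)))^2"
  proof -
    have "n-k-1 = Suc (i-1)" using i1 ip by auto
    then show ?thesis by (simp add: power_mult[symmetric] power_Suc2 mult.commute)
  qed
  have "(y i)^2 \<le> (c ^ (2^(i-1)))^2" using step ih e ip by simp
  then have "y i \<le> c ^ (2^(i-1))"
    by (rule power2_le_imp_le) (simp add: c)
  moreover have "n - Suc k - 1 = i - 1" unfolding i_def by simp
  ultimately show ?case unfolding i_def by simp
qed

lemma feas_y1_le:
  fixes y :: "nat \<Rightarrow> real"
  assumes f: "ll_feasible n x y" and n: "n \<ge> 2" and t: "0 \<le> t" "t + t^(2^(n-1)) = 1/2"
  shows "y 1 \<le> t"
proof (rule ccontr)
  assume "\<not> y 1 \<le> t"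
  then have lt: "t < y 1" by simp
  have "y 1 ^ (2^(n-1)) \<le> y n" using feas_lower[OF f, of n] n by simp
  moreover have "y 1 + y n = 1/2" using f unfolding ll_feasible_def by simp
  moreover have "t ^ (2^(n-1)) \<le> y 1 ^ (2^(n-1))" using lt t by (intro power_mono) auto
  ultimately show False using lt t by linarith
qed

lemma feas_obj_le:
  fixes y :: "nat \<Rightarrow> real"
  assumes f: "ll_feasible n x y" and n: "n \<ge> 2"
  shows "ll_obj n x y \<le> y 1"
proof -
  have "0 \<le> y n" using f n unfolding ll_feasible_def by auto
  moreover have "0 \<le> fst x + snd x - y (n+1) - y (n+2)" using f unfolding ll_feasible_def by auto
  ultimately show ?thesis unfolding ll_obj_def by (simp add: mult_nonneg_nonneg)
qed

lemma S_char:
  fixes t :: real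
  assumes n: "n \<ge> 2" and t: "0 < t" "t + t^(2^(n-1)) = 1/2"
    and x: "0 \<le> fst x" "0 \<le> snd x"
  defines "ys \<equiv> (\<lambda>i. if 1 \<le> i \<and> i \<le> n then t^(2^(i-1)) else if i = n+1 then fst x
                     else if i = n+2 then snd x else (0::real))"
  shows "ll_S n x = {ys}"
proof -
  have chain: "(ys i)^2 \<le> ys (i+1)" if "i \<in> {1..n-1}" for i
  proof -
    have i: "1 \<le> i" "i + 1 \<le> n" using that n by auto
    have "(t^(2^(i-1)))^2 = t^(2^(i+1-1))"
    proof -
      from i obtain j where "i = Suc j" by (cases i) auto
      then show ?thesis by (simp add: power_mult[symmetric] mult.commute)
    qed
    then show ?thesis using i unfolding ys_def by simp
  qed
  have feas: "ll_feasible n x ys"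
    unfolding ll_feasible_def
  proof (intro conjI ballI allI impI chain)
    fix i assume "i \<notin> {1..n+2}" then show "ys i = 0" unfolding ys_def by auto
  next
    show "ys 1 + ys n = 1/2" using n t unfolding ys_def by simp
  next
    fix i assume "i \<in> {1..n}" then show "0 \<le> ys i" using t unfolding ys_def by simp
  qed (use n x in \<open>simp_all add: ys_def\<close>)
  have objys: "ll_obj n x ys = t" unfolding ll_obj_def ys_def using n by simp
  have tl: "t < 1/2" using t by (smt (verit) zero_less_power)
  show ?thesis
  proof (intro equalityI subsetI)
    fix y assume "y \<in> {ys}"
    then have yy: "y = ys" by simp
    have "ll_obj n x y' \<le> ll_obj n x ys" if "ll_feasible n x y'" for y'
      using feas_obj_le[OF that n] feas_y1_le[OF that n less_imp_le[OF t(1)] t(2)] objys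
      by linarith
    then show "y \<in> ll_S n x" unfolding ll_S_def using feas yy by simp
  next
    fix y assume "y \<in> ll_S n x"
    then have f: "ll_feasible n x y" and opt: "ll_obj n x ys \<le> ll_obj n x y"
      unfolding ll_S_def using feas by auto
    have y1le: "y 1 \<le> t" using feas_y1_le[OF f n less_imp_le[OF t(1)] t(2)] .
    have ole: "ll_obj n x y \<le> y 1" using feas_obj_le[OF f n] .
    have y1: "y 1 = t" using y1le ole opt objys by linarith
    have sum: "y 1 + y n = 1/2" using f unfolding ll_feasible_def by simp
    have yn: "y n = t^(2^(n-1))" using sum y1 t by linarith
    have ynpos: "0 < y n" using yn t by simp
    have P0: "y n * (fst x + snd x - y (n+1) - y (n+2)) = 0"
      using y1 ole opt objys feas_obj_le[OF f n] unfolding ll_obj_def by simp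
    have b: "y (n+1) \<le> fst x" "y (n+2) \<le> snd x" using f unfolding ll_feasible_def by auto
    have "fst x + snd x - y (n+1) - y (n+2) = 0" using P0 ynpos by simp
    then have e12: "y (n+1) = fst x" "y (n+2) = snd x" using b by linarith+
    show "y \<in> {ys}"
    proof (simp, rule ext)
      fix i
      show "y i = ys i"
      proof (cases "1 \<le> i \<and> i \<le> n")
        case True
        have lo: "t ^ (2^(i-1)) \<le> y i" using feas_lower[OF f, of i] True y1 by simp
        have "y (n - (n-i)) \<le> t ^ (2^(n-(n-i)-1))"
          using feas_upper[OF f less_imp_le[OF t(1)] _ _, of "n-i"] yn True n
          by (simp add: diff_le_mono2)
        then have hi: "y i \<le> t ^ (2^(i-1))" using True by simp
        show ?thesis using lo hi True unfolding ys_def by simp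
      next
        case False
        then show ?thesis using e12 f unfolding ys_def ll_feasible_def by auto
      qed
    qed
  qed
qed

theorem mainTheorem3:
  fixes n :: nat and lo1 hi1 lo2 hi2 :: real
  assumes "n \<ge> 2"
    and "1 \<le> lo1" and "lo1 < hi1" and "1 \<le> lo2" and "lo2 < hi2"
  shows "\<exists>y. bl_solutions n lo1 hi1 lo2 hi2 = {((lo1, hi2), y)} \<and>
             ul_obj n (lo1, hi2) y = - lo1 + hi2"
proof -
  note n = assms(1)
  define m where "m = (2::nat)^(n-1)"
  have m1: "m \<ge> 1" unfolding m_def by simp
  have "\<exists>t\<ge>0. t \<le> 1/2 \<and> t + t^m = (1/2::real)"
  proof (rule IVT)
    show "0 + 0^m \<le> (1/2::real)" using m1 by (simp add: power_0_left)
    show "(1/2::real) \<le> 1/2 + (1/2)^m" by simp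
    show "\<forall>x. 0 \<le> x \<and> x \<le> 1/2 \<longrightarrow> isCont (\<lambda>t. t + t^m) (x::real)" by simp
  qed simp
  then obtain t :: real where t0: "0 \<le> t" and teq: "t + t^(2^(n-1)) = 1/2"
    unfolding m_def by auto
  have tpos: "0 < t"
  proof (rule ccontr)
    assume "\<not> 0 < t" then have "t = 0" using t0 by simp
    then show False using teq by (simp add: power_0_left)
  qed
  define Y where "Y x = (\<lambda>i. if 1 \<le> i \<and> i \<le> n then t^(2^(i-1)) else if i = n+1 then fst x
                     else if i = n+2 then snd x else (0::real))" for x :: "real \<times> real"
  have S: "ll_S n x = {Y x}" if "0 \<le> fst x" "0 \<le> snd x" for x
    unfolding Y_def by (rule S_char[OF n tpos teq that])
  have ul: "ul_obj n x (Y x) = - fst x + snd x" for x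
    unfolding ul_obj_def Y_def by simp
  have bf: "bl_feasible n lo1 hi1 lo2 hi2 x y \<longleftrightarrow>
      lo1 \<le> fst x \<and> fst x \<le> hi1 \<and> lo2 \<le> snd x \<and> snd x \<le> hi2 \<and> y = Y x" for x y
  proof -
    have "lo1 \<le> fst x \<Longrightarrow> lo2 \<le> snd x \<Longrightarrow> ll_S n x = {Y x}"
      using assms by (intro S) auto
    then show ?thesis unfolding bl_feasible_def by auto
  qed
  show ?thesis
  proof (intro exI conjI)
    show "ul_obj n (lo1, hi2) (Y (lo1, hi2)) = - lo1 + hi2" using ul by simp
    show "bl_solutions n lo1 hi1 lo2 hi2 = {((lo1, hi2), Y (lo1, hi2))}"
    proof (intro equalityI subsetI)
      fix p assume "p \<in> {((lo1, hi2), Y (lo1, hi2))}"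
      then have p: "p = ((lo1, hi2), Y (lo1, hi2))" by simp
      have f: "bl_feasible n lo1 hi1 lo2 hi2 (lo1, hi2) (Y (lo1, hi2))"
        using bf assms by simp
      have "ul_obj n x' y' \<le> ul_obj n (lo1, hi2) (Y (lo1, hi2))"
        if "bl_feasible n lo1 hi1 lo2 hi2 x' y'" for x' y'
        using that bf[of x' y'] ul[of x'] ul[of "(lo1,hi2)"] by auto
      then show "p \<in> bl_solutions n lo1 hi1 lo2 hi2"
        unfolding bl_solutions_def p using f by auto
    next
      fix p assume "p \<in> bl_solutions n lo1 hi1 lo2 hi2"
      then obtain x y where p: "p = (x, y)" and f: "bl_feasible n lo1 hi1 lo2 hi2 x y"
        and opt: "\<forall>x' y'. bl_feasible n lo1 hi1 lo2 hi2 x' y' \<longrightarrow> ul_obj n x' y' \<le> ul_obj n x y"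
        unfolding bl_solutions_def by auto
      have f0: "bl_feasible n lo1 hi1 lo2 hi2 (lo1, hi2) (Y (lo1, hi2))"
        using bf assms by simp
      have b: "lo1 \<le> fst x" "snd x \<le> hi2" and yy: "y = Y x" using f bf by auto
      have "- lo1 + hi2 \<le> - fst x + snd x"
        using opt f0 ul[of x] ul[of "(lo1,hi2)"] yy by force
      then have "fst x = lo1" "snd x = hi2" using b by linarith+
      then have "x = (lo1, hi2)" by (simp add: prod_eq_iff)
      then show "p \<in> {((lo1, hi2), Y (lo1, hi2))}" using p yy by simp
    qed
  qed
qed

end
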